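(* Let $3\le k\le n-1$ and let $T$ be a tree attaining the maximum value of $M_2$ over $\mathcal{CT}_{n,k}$. If $T$ contains a pendent vertex adjacent to a branching vertex, then $T$ contains no pendent path of length greater than $2$.
   Context: A chemical tree is a tree with maximum degree at most $4$. A pendent vertex has degree $1$; a branching vertex has degree greater than $2$. A pendent path is a path $u_0\cdots u_r$ ($r\ge1$) with $u_0$ pendent, $u_r$ branching and all internal vertices of degree $2$; its length is $r$. A segment of a tree is a path of positive length neither of whose end vertices has degree $2$ and all of whose internal vertices have degree $2$. $\mathcal{CT}_{n,k}$ is the class of all $n$-vertex chemical trees with exactly $k$ segments. $M_2(G)=\sum_{uv\in E(G)}d_ud_v$, where $d_v$ is the degree of $v$. *)

theory Defs
  imports Main
begin

definition simple_graph :: "'a set \<Rightarrow> 'a set set \<Rightarrow> bool" where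
  "simple_graph V E \<longleftrightarrow> finite V \<and> (\<forall>e\<in>E. e \<subseteq> V \<and> card e = 2)"

definition deg :: "'a set set \<Rightarrow> 'a \<Rightarrow> nat" where
  "deg E v = card {e\<in>E. v \<in> e}"

definition is_path :: "'a set \<Rightarrow> 'a set set \<Rightarrow> 'a list \<Rightarrow> bool" where
  "is_path V E ps \<longleftrightarrow> ps \<noteq> [] \<and> distinct ps \<and> set ps \<subseteq> V \<and>
     (\<forall>i. Suc i < length ps \<longrightarrow> {ps ! i, ps ! Suc i} \<in> E)"

definition connected_graph :: "'a set \<Rightarrow> 'a set set \<Rightarrow> bool" where
  "connected_graph V E \<longleftrightarrow>
     (\<forall>u\<in>V. \<forall>v\<in>V. \<exists>ps. is_path V E ps \<and> hd ps = u \<and> last ps = v)"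

definition has_cycle :: "'a set \<Rightarrow> 'a set set \<Rightarrow> bool" where
  "has_cycle V E \<longleftrightarrow> (\<exists>ps. is_path V E ps \<and> length ps \<ge> 3 \<and> {last ps, hd ps} \<in> E)"

definition is_tree :: "'a set \<Rightarrow> 'a set set \<Rightarrow> bool" where
  "is_tree V E \<longleftrightarrow> simple_graph V E \<and> V \<noteq> {} \<and> connected_graph V E \<and> \<not> has_cycle V E"

definition chemical_tree :: "'a set \<Rightarrow> 'a set set \<Rightarrow> bool" where
  "chemical_tree V E \<longleftrightarrow> is_tree V E \<and> (\<forall>v\<in>V. deg E v \<le> 4)"

definition is_segment :: "'a set \<Rightarrow> 'a set set \<Rightarrow> 'a list \<Rightarrow> bool" where
  "is_segment V E ps \<longleftrightarrow> is_path V E ps \<and> length ps \<ge> 2 \<and>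
     deg E (hd ps) \<noteq> 2 \<and> deg E (last ps) \<noteq> 2 \<and>
     (\<forall>i. 0 < i \<and> Suc i < length ps \<longrightarrow> deg E (ps ! i) = 2)"

text \<open>Segments are counted as unordered paths; in a tree a path is determined
  (up to reversal) by its vertex set.\<close>
definition num_segments :: "'a set \<Rightarrow> 'a set set \<Rightarrow> nat" where
  "num_segments V E = card {set ps | ps. is_segment V E ps}"

definition CT :: "'a set \<Rightarrow> 'a set set \<Rightarrow> nat \<Rightarrow> nat \<Rightarrow> bool" where
  "CT V E n k \<longleftrightarrow> chemical_tree V E \<and> card V = n \<and> num_segments V E = k"

text \<open>Pendent path u_0 ... u_r (r \<ge> 1): u_0 pendent, u_r branching, internal degree 2.
  Its length is r = length ps - 1.\<close>
definition pendent_path :: "'a set \<Rightarrow> 'a set set \<Rightarrow> 'a list \<Rightarrow> bool" where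
  "pendent_path V E ps \<longleftrightarrow> is_path V E ps \<and> length ps \<ge> 2 \<and>
     deg E (hd ps) = 1 \<and> deg E (last ps) > 2 \<and>
     (\<forall>i. 0 < i \<and> Suc i < length ps \<longrightarrow> deg E (ps ! i) = 2)"

definition M2 :: "'a set set \<Rightarrow> nat" where
  "M2 E = (\<Sum>e\<in>E. \<Prod>v\<in>e. deg E v)"

end

theory Submission
  imports Defs
begin


definition adj :: "'a set set \<Rightarrow> 'a \<Rightarrow> 'a \<Rightarrow> bool" where
  "adj E x y \<longleftrightarrow> {x,y} \<in> E"

lemma is_path_single: "is_path V E [x] \<longleftrightarrow> x \<in> V"
  by (auto simp: is_path_def)

lemma is_path_Cons2:
  "is_path V E (x#y#xs) \<longleftrightarrow> x \<in> V \<and> x \<notin> set (y#xs) \<and> {x,y} \<in> E \<and> is_path V E (y#xs)"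
proof
  assume a: "is_path V E (x#y#xs)"
  have "\<forall>i. Suc i < length (y#xs) \<longrightarrow> {(y#xs) ! i, (y#xs) ! Suc i} \<in> E"
  proof (intro allI impI)
    fix i assume "Suc i < length (y#xs)"
    then have "Suc (Suc i) < length (x#y#xs)" by simp
    with a have "{(x#y#xs) ! Suc i, (x#y#xs) ! Suc (Suc i)} \<in> E" by (auto simp: is_path_def)
    then show "{(y#xs) ! i, (y#xs) ! Suc i} \<in> E" by simp
  qed
  moreover have "{x,y} \<in> E" using a unfolding is_path_def by (metis length_Cons nth_Cons_0 nth_Cons_Suc zero_less_Suc Suc_less_eq)
  ultimately show "x \<in> V \<and> x \<notin> set (y#xs) \<and> {x,y} \<in> E \<and> is_path V E (y#xs)"
    using a by (auto simp: is_path_def)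
next
  assume a: "x \<in> V \<and> x \<notin> set (y#xs) \<and> {x,y} \<in> E \<and> is_path V E (y#xs)"
  have "\<forall>i. Suc i < length (x#y#xs) \<longrightarrow> {(x#y#xs) ! i, (x#y#xs) ! Suc i} \<in> E"
  proof (intro allI impI)
    fix i assume i: "Suc i < length (x#y#xs)"
    show "{(x#y#xs) ! i, (x#y#xs) ! Suc i} \<in> E"
    proof (cases i)
      case 0 then show ?thesis using a by simp
    next
      case (Suc j) then show ?thesis using a i by (auto simp: is_path_def)
    qed
  qed
  then show "is_path V E (x#y#xs)" using a by (auto simp: is_path_def)
qed

lemma is_path_hd_last_reach:
  "is_path V E ps \<Longrightarrow> (adj E)\<^sup>*\<^sup>* (hd ps) (last ps)"
proof (induction ps rule: induct_list012)
  case 1 then show ?case by (simp add: is_path_def)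
next
  case (2 x) then show ?case by simp
next
  case (3 x y zs)
  then have "{x,y} \<in> E" "is_path V E (y#zs)" by (auto simp: is_path_Cons2)
  then show ?case using 3 by (auto simp: adj_def intro: converse_rtranclp_into_rtranclp)
qed

lemma is_path_suffix: "is_path V E (xs @ ys) \<Longrightarrow> ys \<noteq> [] \<Longrightarrow> is_path V E ys"
proof (induction xs)
  case Nil then show ?case by simp
next
  case (Cons a xs)
  then show ?case by (cases "xs @ ys") (auto simp: is_path_Cons2)
qed

lemma walk_to_path:
  assumes "(adj E)\<^sup>*\<^sup>* a b" "b \<in> V" "simple_graph V E"
  shows "\<exists>ps. is_path V E ps \<and> hd ps = a \<and> last ps = b"
  using assms(1)
proof (induction rule: converse_rtranclp_induct)
  case base then show ?case using assms(2) by (intro exI[of _ "[b]"]) (simp add: is_path_single)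
next
  case (step a c)
  then obtain ps where ps: "is_path V E ps" "hd ps = c" "last ps = b" by blast
  show ?case
  proof (cases "a \<in> set ps")
    case True
    then obtain xs ys where "ps = xs @ a # ys" by (meson split_list)
    then show ?thesis using ps is_path_suffix[of V E xs "a#ys"]
      by (intro exI[of _ "a#ys"]) auto
  next
    case False
    have "ps \<noteq> []" using ps by (simp add: is_path_def)
    then obtain y zs where yz: "ps = y # zs" by (cases ps) auto
    have "{a,c} \<in> E" using step by (simp add: adj_def)
    then have "a \<in> V" using assms(3) unfolding simple_graph_def by auto
    then show ?thesis using ps False yz \<open>{a,c} \<in> E\<close>
      by (intro exI[of _ "a#ps"]) (auto simp: is_path_Cons2)
  qed
qed

lemma adj_sym: "adj E x y = adj E y x" by (simp add: adj_def insert_commute)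

lemma reach_sym: "(adj E)\<^sup>*\<^sup>* x y \<Longrightarrow> (adj E)\<^sup>*\<^sup>* y x"
proof (induction rule: rtranclp_induct)
  case base then show ?case by simp
next
  case (step y z) then show ?case by (metis adj_sym converse_rtranclp_into_rtranclp)
qed

lemma reach_hom:
  assumes "\<And>x y. R x y \<Longrightarrow> S\<^sup>*\<^sup>* (h x) (h y)" "R\<^sup>*\<^sup>* a b"
  shows "S\<^sup>*\<^sup>* (h a) (h b)"
  using assms(2) by (induction rule: rtranclp_induct) (auto intro: rtranclp_trans assms(1))

lemma is_path_mono: "is_path V E ps \<Longrightarrow> E \<subseteq> F \<Longrightarrow> is_path V F ps"
  by (auto simp: is_path_def)

lemma cycle_to_reach:
  assumes "has_cycle V E"
  shows "\<exists>a b. {a,b} \<in> E \<and> (adj (E - {{a,b}}))\<^sup>*\<^sup>* b a"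
proof -
  obtain ps where ps: "is_path V E ps" "length ps \<ge> 3" "{last ps, hd ps} \<in> E"
    using assms by (auto simp: has_cycle_def)
  let ?a = "last ps" and ?b = "hd ps"
  have d: "distinct ps" using ps by (simp add: is_path_def)
  have "is_path V (E - {{?a,?b}}) ps"
    unfolding is_path_def
  proof (intro conjI allI impI)
    fix i assume i: "Suc i < length ps"
    have e: "{ps!i, ps!Suc i} \<in> E" using ps i by (simp add: is_path_def)
    have lst: "?a = ps ! (length ps - 1)" using ps by (auto simp: last_conv_nth is_path_def)
    have hd: "?b = ps ! 0" using ps by (auto simp: hd_conv_nth is_path_def)
    have "{ps!i, ps!Suc i} \<noteq> {?a,?b}"
    proof
      assume eq: "{ps!i, ps!Suc i} = {?a,?b}"
      have "ps ! i \<in> {?a, ?b}" using eq by blast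
      then have "ps ! i = ps ! (length ps - 1) \<or> ps ! i = ps ! 0" using lst hd by auto
      moreover have "i < length ps" "length ps - 1 < length ps" "0 < length ps" using i by auto
      ultimately have "i = length ps - 1 \<or> i = 0"
        using nth_eq_iff_index_eq[OF d] by metis
      then have i0: "i = 0" using i by auto
      moreover have "ps ! Suc i \<in> {?a, ?b}" using eq by blast
      ultimately have "ps ! Suc 0 = ps ! (length ps - 1) \<or> ps ! Suc 0 = ps ! 0" using lst hd by auto
      moreover have "Suc 0 < length ps" "length ps - 1 < length ps" "0 < length ps" using i by auto
      ultimately have "Suc 0 = length ps - 1 \<or> Suc 0 = 0"
        using nth_eq_iff_index_eq[OF d] by metis
      then show False using ps(2) by auto
    qed
    then show "{ps!i, ps!Suc i} \<in> E - {{?a,?b}}" using e by simp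
  qed (use ps in \<open>auto simp: is_path_def\<close>)
  then have "(adj (E - {{?a,?b}}))\<^sup>*\<^sup>* ?b ?a" by (rule is_path_hd_last_reach)
  then show ?thesis using ps by blast
qed

lemma simple_graph_diff: "simple_graph V E \<Longrightarrow> simple_graph V (E - F)"
  by (auto simp: simple_graph_def)

lemma reach_to_cycle:
  assumes "simple_graph V E" "{a,b} \<in> E" "(adj (E - {{a,b}}))\<^sup>*\<^sup>* a b"
  shows "has_cycle V E"
proof -
  have ab: "a \<noteq> b" "b \<in> V" using assms(1,2) unfolding simple_graph_def by (auto)
  obtain ps where ps: "is_path V (E - {{a,b}}) ps" "hd ps = a" "last ps = b"
    using walk_to_path[OF assms(3) ab(2) simple_graph_diff[OF assms(1)]] by blast
  have ne: "ps \<noteq> []" using ps by (simp add: is_path_def)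
  have l2: "length ps \<ge> 2"
  proof (rule ccontr)
    assume "\<not> length ps \<ge> 2"
    moreover have "length ps > 0" using ne by simp
    ultimately have "length ps = 1" by linarith
    then obtain x where "ps = [x]" by (metis One_nat_def length_0_conv length_Suc_conv)
    then have "hd ps = last ps" by simp
    then show False using ps ab by simp
  qed
  have l3: "length ps \<ge> 3"
  proof (rule ccontr)
    assume "\<not> length ps \<ge> 3"
    then have "length ps = 2" using l2 by simp
    then obtain x y where "ps = [x,y]" by (cases ps; cases "tl ps") auto
    then show False using ps by (auto simp: is_path_Cons2)
  qed
  have "is_path V E ps" using ps(1) by (rule is_path_mono) auto
  moreover have "{last ps, hd ps} \<in> E" using ps assms(2) by (simp add: insert_commute)
  ultimately show ?thesis using l3 unfolding has_cycle_def by blast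
qed



lemma simple_edge: "simple_graph V E \<Longrightarrow> {x,a} \<in> E \<Longrightarrow> a \<noteq> x \<and> a \<in> V \<and> x \<in> V"
proof -
  assume s: "simple_graph V E" and e: "{x,a} \<in> E"
  then have "card {x,a} = 2" "{x,a} \<subseteq> V" unfolding simple_graph_def by auto
  then show ?thesis by (cases "a = x") auto
qed

lemma simple_finite: "simple_graph V E \<Longrightarrow> finite E"
proof -
  assume "simple_graph V E"
  then have "E \<subseteq> Pow V" "finite V" unfolding simple_graph_def by auto
  then show "finite E" by (meson finite_Pow_iff finite_subset)
qed

lemma deg_ge2:
  assumes "finite E" "{x,a} \<in> E" "{x,b} \<in> E" "a \<noteq> b" "a \<noteq> x" "b \<noteq> x"
  shows "2 \<le> deg E x"
proof -
  have "card {{x,a},{x,b}} = 2" using assms(4-6) by (auto simp: doubleton_eq_iff)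
  moreover have "{{x,a},{x,b}} \<subseteq> {e\<in>E. x \<in> e}" using assms by auto
  moreover have "finite {e\<in>E. x \<in> e}" using assms(1) by simp
  ultimately show ?thesis unfolding deg_def by (metis card_mono)
qed

lemma deg_ge3:
  assumes "finite E" "{x,a} \<in> E" "{x,b} \<in> E" "{x,c} \<in> E" "a \<noteq> b" "a \<noteq> c" "b \<noteq> c"
    "a \<noteq> x" "b \<noteq> x" "c \<noteq> x"
  shows "3 \<le> deg E x"
proof -
  have "card {{x,a},{x,b},{x,c}} = 3" using assms(5-10) by (auto simp: doubleton_eq_iff)
  moreover have "{{x,a},{x,b},{x,c}} \<subseteq> {e\<in>E. x \<in> e}" using assms by auto
  moreover have "finite {e\<in>E. x \<in> e}" using assms(1) by simp
  ultimately show ?thesis unfolding deg_def by (metis card_mono)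
qed

lemma path_edge: "is_path V E qs \<Longrightarrow> Suc i < length qs \<Longrightarrow> {qs!i, qs!Suc i} \<in> E"
  by (simp add: is_path_def)

lemma path_internal:
  assumes "is_path V E qs" "0 < i" "Suc i < length qs"
  shows "{qs!i, qs!(i-1)} \<in> E" "{qs!i, qs!Suc i} \<in> E" "qs!(i-1) \<noteq> qs!Suc i"
    "qs!(i-1) \<noteq> qs!i" "qs!Suc i \<noteq> qs!i"
proof -
  have d: "distinct qs" using assms by (simp add: is_path_def)
  have "{qs!(i-1), qs!Suc (i-1)} \<in> E" using assms by (intro path_edge) auto
  then show "{qs!i, qs!(i-1)} \<in> E" using assms(2) by (simp add: insert_commute)
  show "{qs!i, qs!Suc i} \<in> E" using assms by (intro path_edge) auto
  show "qs!(i-1) \<noteq> qs!Suc i" "qs!(i-1) \<noteq> qs!i" "qs!Suc i \<noteq> qs!i"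
    using assms d by (auto simp: nth_eq_iff_index_eq)
qed

lemma seg_end:
  assumes "is_segment V E qs" "x \<in> set qs" "deg E x \<noteq> 2"
  shows "x = hd qs \<or> x = last qs"
proof -
  obtain i where i: "i < length qs" "qs ! i = x" using assms(2) by (meson in_set_conv_nth)
  have "\<not> (0 < i \<and> Suc i < length qs)" using assms i unfolding is_segment_def by auto
  then have "i = 0 \<or> i = length qs - 1" using i by auto
  moreover have "qs \<noteq> []" using i by auto
  ultimately show ?thesis using i by (auto simp: hd_conv_nth last_conv_nth)
qed

lemma seg_mid:
  assumes "is_segment V E qs" "x \<in> set qs" "deg E x = 2"
  shows "\<exists>i. 0 < i \<and> Suc i < length qs \<and> qs ! i = x"
proof -
  obtain i where i: "i < length qs" "qs ! i = x" using assms(2) by (meson in_set_conv_nth)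
  have ne: "qs \<noteq> []" using i by auto
  have "i \<noteq> 0" using assms i ne unfolding is_segment_def by (auto simp: hd_conv_nth)
  moreover have "i \<noteq> length qs - 1" using assms i ne unfolding is_segment_def by (auto simp: last_conv_nth)
  ultimately show ?thesis using i by (intro exI[of _ i]) auto
qed

lemma is_path_rev: "is_path V E qs \<Longrightarrow> is_path V E (rev qs)"
  unfolding is_path_def
proof (intro conjI allI impI; (elim conjE)?)
  fix i assume a: "\<forall>i. Suc i < length qs \<longrightarrow> {qs ! i, qs ! Suc i} \<in> E" "Suc i < length (rev qs)"
  let ?j = "length qs - Suc (Suc i)"
  have "{qs ! ?j, qs ! Suc ?j} \<in> E" using a by auto
  moreover have "rev qs ! i = qs ! Suc ?j" "rev qs ! Suc i = qs ! ?j" using a(2)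
    by (auto simp: rev_nth Suc_diff_Suc)
  ultimately show "{rev qs ! i, rev qs ! Suc i} \<in> E" by (simp add: insert_commute)
qed auto

lemma is_segment_rev:
  assumes q: "is_segment V E qs" shows "is_segment V E (rev qs)"
proof -
  have ne: "qs \<noteq> []" using q by (auto simp: is_segment_def)
  have "deg E (rev qs ! i) = 2" if a: "0 < i" "Suc i < length (rev qs)" for i
  proof -
    have "rev qs ! i = qs ! (length qs - Suc i)" using a by (simp add: rev_nth)
    moreover have "0 < length qs - Suc i \<and> Suc (length qs - Suc i) < length qs" using a by auto
    ultimately show ?thesis using q unfolding is_segment_def by auto
  qed
  then show ?thesis using q ne is_path_rev unfolding is_segment_def by (auto simp: hd_rev last_rev)
qed

lemma seg_walk:
  assumes sg: "simple_graph V E"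
    and p: "is_segment V E ps" and q: "is_segment V E qs"
    and h0: "ps ! 0 = qs ! 0" and h1: "ps ! 1 = qs ! 1"
  shows "ps = qs"
proof -
  have fE: "finite E" using sg by (rule simple_finite)
  have lp: "length ps \<ge> 2" and lq: "length qs \<ge> 2" using p q by (auto simp: is_segment_def)
  have nep: "ps \<noteq> []" and neq: "qs \<noteq> []" using lp lq by auto
  have eq: "i < length ps \<Longrightarrow> i < length qs \<Longrightarrow> ps ! i = qs ! i" for i
  proof (induction i rule: less_induct)
    case (less i)
    show ?case
    proof (cases "i \<le> 1")
      case True then show ?thesis using h0 h1 by (cases i) auto
    next
      case False
      define j where "j = i - 1"
      have j: "0 < j" "Suc j < length ps" "Suc j < length qs" "i = Suc j" using False less.prems by (auto simp: j_def)
      have IH1: "ps ! j = qs ! j" "ps ! (j-1) = qs ! (j-1)" using less.IH j by auto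
      let ?x = "ps ! j"
      have d2: "deg E ?x = 2" using p j unfolding is_segment_def by auto
      show ?thesis
      proof (rule ccontr)
        assume ne: "ps ! i \<noteq> qs ! i"
        have pp: "is_path V E ps" "is_path V E qs" using p q by (auto simp: is_segment_def)
        note A = path_internal[OF pp(1) j(1,2)] and B = path_internal[OF pp(2) j(1,3)]
        have "3 \<le> deg E ?x"
          apply (rule deg_ge3[OF fE, of ?x "ps!(j-1)" "ps!Suc j" "qs!Suc j"])
          using A B IH1 ne j(4) by (simp_all add: insert_commute)
        then show False using d2 by simp
      qed
    qed
  qed
  have "length ps = length qs"
  proof (rule ccontr)
    assume "length ps \<noteq> length qs"
    then consider "length ps < length qs" | "length qs < length ps" by linarith
    then show False
    proof cases
      case 1
      let ?i = "length ps - 1"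
      have "ps ! ?i = qs ! ?i" using eq 1 lp by auto
      moreover have "deg E (qs ! ?i) = 2" using q 1 lp unfolding is_segment_def by auto
      moreover have "deg E (ps ! ?i) \<noteq> 2" using p lp last_conv_nth[OF nep] unfolding is_segment_def by auto
      ultimately show False by simp
    next
      case 2
      let ?i = "length qs - 1"
      have "ps ! ?i = qs ! ?i" using eq 2 lq by auto
      moreover have "deg E (ps ! ?i) = 2" using p 2 lq unfolding is_segment_def by auto
      moreover have "deg E (qs ! ?i) \<noteq> 2" using q lq last_conv_nth[OF neq] unfolding is_segment_def by auto
      ultimately show False by simp
    qed
  qed
  then show ?thesis using eq by (auto intro: nth_equalityI)
qed



lemma edge_form: "simple_graph V E \<Longrightarrow> e \<in> E \<Longrightarrow> x \<in> e \<Longrightarrow> \<exists>y. e = {x,y} \<and> y \<noteq> x"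
proof -
  assume "simple_graph V E" "e \<in> E" "x \<in> e"
  then have "card e = 2" unfolding simple_graph_def by auto
  then obtain a b where "e = {a,b}" "a \<noteq> b" by (meson card_2_iff)
  then have "x = a \<or> x = b" using \<open>x \<in> e\<close> by auto
  then show ?thesis
  proof
    assume "x = a" then show ?thesis using \<open>e = {a,b}\<close> \<open>a \<noteq> b\<close> by blast
  next
    assume "x = b" then show ?thesis using \<open>e = {a,b}\<close> \<open>a \<noteq> b\<close> insert_commute[of a b "{}"] by metis
  qed
qed

lemma leaf_nb:
  assumes "simple_graph V E" "deg E x = 1" "{x,a} \<in> E" "{x,b} \<in> E"
  shows "a = b"
proof (rule ccontr)
  assume "a \<noteq> b"
  moreover have "a \<noteq> x" "b \<noteq> x" using simple_edge[OF assms(1) assms(3)] simple_edge[OF assms(1) assms(4)] by auto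
  ultimately have "2 \<le> deg E x" using deg_ge2[OF simple_finite[OF assms(1)] assms(3,4)] by auto
  then show False using assms(2) by simp
qed

lemma deg2_nb:
  assumes "simple_graph V E" "deg E x = 2" "{x,a} \<in> E" "{x,b} \<in> E" "{x,c} \<in> E" "a \<noteq> b"
  shows "c = a \<or> c = b"
proof (rule ccontr)
  assume "\<not> (c = a \<or> c = b)"
  then have ca: "a \<noteq> c" "b \<noteq> c" by auto
  have x: "a \<noteq> x" "b \<noteq> x" "c \<noteq> x" using simple_edge[OF assms(1) assms(3)]
    simple_edge[OF assms(1) assms(4)] simple_edge[OF assms(1) assms(5)] by auto
  have "3 \<le> deg E x" by (rule deg_ge3[OF simple_finite[OF assms(1)] assms(3,4,5) assms(6) ca x])
  then show False using assms(2) by simp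
qed

lemma edges_at_leaf:
  assumes "simple_graph V E" "deg E x = 1" "{x,a} \<in> E"
  shows "{e\<in>E. x \<in> e} = {{x,a}}"
proof -
  have "e = {x,a}" if ee: "e \<in> E" "x \<in> e" for e
  proof -
    obtain y where y: "e = {x,y}" using edge_form[OF assms(1) ee] by blast
    then have "{x,y} \<in> E" using ee by simp
    then have "a = y" by (rule leaf_nb[OF assms(1,2,3)])
    then show ?thesis using y by simp
  qed
  then show ?thesis using assms(3) by blast
qed

locale trf =
  fixes V :: "'a set" and E :: "'a set set" and u v :: 'a and ps :: "'a list"
  assumes ct: "chemical_tree V E"
    and uV: "u \<in> V" and vV: "v \<in> V" and uv: "{u,v} \<in> E"
    and du: "deg E u = 1" and dv: "deg E v > 2"
    and pp: "pendent_path V E ps" and len: "length ps \<ge> 4"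
begin

abbreviation "w0 \<equiv> ps ! 0"
abbreviation "w1 \<equiv> ps ! 1"
abbreviation "w2 \<equiv> ps ! 2"

definition "E' = (E - {{w0,w1},{u,v}}) \<union> {{u,w0},{w0,v}}"

lemma sg: "simple_graph V E" using ct by (simp add: chemical_tree_def is_tree_def)
lemma fE: "finite E" using sg by (rule simple_finite)
lemma psp: "is_path V E ps" using pp by (simp add: pendent_path_def)
lemma psd: "distinct ps" using psp by (simp add: is_path_def)
lemma psV: "set ps \<subseteq> V" using psp by (simp add: is_path_def)
lemma ne: "ps \<noteq> []" using len by auto
lemma dw0: "deg E w0 = 1" using pp ne by (simp add: pendent_path_def hd_conv_nth)
lemma dint: "0 < i \<Longrightarrow> Suc i < length ps \<Longrightarrow> deg E (ps ! i) = 2"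
  using pp by (simp add: pendent_path_def)
lemma dw1: "deg E w1 = 2" using dint[of 1] len by simp
lemma dw2: "deg E w2 = 2" using dint[of 2] len by simp
lemma dlast: "deg E (last ps) > 2" using pp by (simp add: pendent_path_def)
lemma e01: "{w0,w1} \<in> E" using path_edge[OF psp, of 0] len by simp
lemma e12: "{w1,w2} \<in> E" using path_edge[OF psp, of 1] len by (simp add: numeral_2_eq_2)
lemma l0: "0 < length ps" and l1: "1 < length ps" and l2: "2 < length ps" using len by auto
lemma w01: "w0 \<noteq> w1" using nth_eq_iff_index_eq[OF psd l0 l1] by simp
lemma w02: "w0 \<noteq> w2" using nth_eq_iff_index_eq[OF psd l0 l2] by simp
lemma w12: "w1 \<noteq> w2" using nth_eq_iff_index_eq[OF psd l1 l2] by simp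
lemma w0V: "w0 \<in> V" using psV nth_mem[OF l0] by blast
lemma w1V: "w1 \<in> V" using psV nth_mem[OF l1] by blast
lemma w2V: "w2 \<in> V" using psV nth_mem[OF l2] by blast
lemma uv_ne: "u \<noteq> v" using simple_edge[OF sg uv] by auto

lemma nb_u: "{u,x} \<in> E \<Longrightarrow> x = v" using leaf_nb[OF sg du _ uv] by blast
lemma nb_w0: "{w0,x} \<in> E \<Longrightarrow> x = w1" using leaf_nb[OF sg dw0 _ e01] by blast
lemma nb_w1: "{w1,x} \<in> E \<Longrightarrow> x = w0 \<or> x = w2"
proof -
  assume a: "{w1,x} \<in> E"
  have "{w1,w0} \<in> E" using e01 by (simp add: insert_commute)
  then show ?thesis using deg2_nb[OF sg dw1 _ e12 a, of w0] w02 by blast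
qed

lemma u_w0: "u \<noteq> w0"
proof
  assume "u = w0"
  then have "{w0,v} \<in> E" using uv by simp
  then have "v = w1" by (rule nb_w0)
  then show False using dv dw1 by simp
qed
lemma u_w1: "u \<noteq> w1" using du dw1 by auto
lemma u_w2: "u \<noteq> w2" using du dw2 by auto
lemma v_w0: "v \<noteq> w0" using dv dw0 by auto
lemma v_w1: "v \<noteq> w1" using dv dw1 by auto
lemma v_w2: "v \<noteq> w2" using dv dw2 by auto

lemma E_w0: "{e\<in>E. w0 \<in> e} = {{w0,w1}}" by (rule edges_at_leaf[OF sg dw0 e01])
lemma E_u: "{e\<in>E. u \<in> e} = {{u,v}}" by (rule edges_at_leaf[OF sg du uv])
lemma uw0_notE: "{u,w0} \<notin> E"
proof
  assume "{u,w0} \<in> E"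
  then have "{w0,u} \<in> E" by (simp add: insert_commute)
  then have "u = w1" by (rule nb_w0)
  then show False using u_w1 by simp
qed
lemma w0v_notE: "{w0,v} \<notin> E"
proof
  assume "{w0,v} \<in> E"
  then have "v = w1" by (rule nb_w0)
  then show False using v_w1 by simp
qed

lemma E'_other: "x \<notin> {u,v,w0,w1} \<Longrightarrow> {e\<in>E'. x \<in> e} = {e\<in>E. x \<in> e}"
  unfolding E'_def by auto
lemma E'_w0: "{e\<in>E'. w0 \<in> e} = {{u,w0},{w0,v}}"
proof -
  have "e = {w0,w1}" if "e \<in> E" "w0 \<in> e" for e using E_w0 that by blast
  then show ?thesis unfolding E'_def by blast
qed
lemma E'_w1: "{e\<in>E'. w1 \<in> e} = {e\<in>E. w1 \<in> e} - {{w0,w1}}"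
  using u_w1 v_w1 w01 unfolding E'_def by (auto simp: doubleton_eq_iff)
lemma E'_u: "{e\<in>E'. u \<in> e} = {{u,w0}}"
proof -
  have "e = {u,v}" if "e \<in> E" "u \<in> e" for e using E_u that by blast
  moreover have "u \<notin> {w0,v}" using u_w0 uv_ne by auto
  ultimately show ?thesis unfolding E'_def by blast
qed
lemma E'_v: "{e\<in>E'. v \<in> e} = insert {w0,v} ({e\<in>E. v \<in> e} - {{u,v}})"
  using v_w0 v_w1 unfolding E'_def by auto

lemma d'_w0: "deg E' w0 = 2" unfolding deg_def E'_w0 using uv_ne u_w0 v_w0
  by (auto simp: doubleton_eq_iff)
lemma d'_w1: "deg E' w1 = 1" unfolding deg_def E'_w1 using dw1 e01 fE
  by (simp add: deg_def card_Diff_singleton)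
lemma d'_u: "deg E' u = 1" unfolding deg_def E'_u by simp
lemma d'_v: "deg E' v = deg E v" unfolding deg_def E'_v
proof -
  have f: "finite {e\<in>E. v \<in> e}" using fE by simp
  have "{u,v} \<in> {e\<in>E. v \<in> e}" using uv by simp
  then have "card ({e\<in>E. v \<in> e} - {{u,v}}) = card {e\<in>E. v \<in> e} - 1" using f by (simp add: card_Diff_singleton)
  moreover have "card {e\<in>E. v \<in> e} \<ge> 1" using dv by (simp add: deg_def)
  ultimately show "card (insert {w0,v} ({e\<in>E. v \<in> e} - {{u,v}})) = card {e\<in>E. v \<in> e}"
    using f w0v_notE by simp
qed
lemma d'_same: "x \<noteq> w0 \<Longrightarrow> x \<noteq> w1 \<Longrightarrow> deg E' x = deg E x"
proof -
  assume "x \<noteq> w0" "x \<noteq> w1"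
  then consider "x = u" | "x = v" | "x \<notin> {u,v,w0,w1}" by auto
  then show ?thesis
  proof cases
    case 1 then show ?thesis using d'_u du by simp
  next
    case 2 then show ?thesis using d'_v by simp
  qed (simp add: deg_def E'_other)
qed

lemma sg': "simple_graph V E'"
  using sg uV vV w0V u_w0 v_w0 unfolding simple_graph_def E'_def by auto

end


context trf begin

lemma E'_mem: "e \<in> E' \<longleftrightarrow> (e \<in> E \<and> e \<noteq> {w0,w1} \<and> e \<noteq> {u,v}) \<or> e = {u,w0} \<or> e = {w0,v}"
  unfolding E'_def by blast

lemma E'_cases1: "e \<in> E' \<Longrightarrow> e \<noteq> {u,w0} \<Longrightarrow> e = {w0,v} \<or> (e \<in> E \<and> e \<noteq> {w0,w1} \<and> e \<noteq> {u,v})"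
  using E'_mem[of e] by metis
lemma E'_cases2: "e \<in> E' \<Longrightarrow> e \<noteq> {w0,v} \<Longrightarrow> e = {u,w0} \<or> (e \<in> E \<and> e \<noteq> {w0,w1} \<and> e \<noteq> {u,v})"
  using E'_mem[of e] by metis

lemma not_w0: "{x,y} \<in> E \<Longrightarrow> {x,y} \<noteq> {w0,w1} \<Longrightarrow> x \<noteq> w0 \<and> y \<noteq> w0"
proof -
  assume a: "{x,y} \<in> E" "{x,y} \<noteq> {w0,w1}"
  have "w0 \<notin> {x,y}"
  proof
    assume "w0 \<in> {x,y}"
    then have "{x,y} \<in> {e\<in>E. w0 \<in> e}" using a by blast
    then have "{x,y} = {w0,w1}" using E_w0 by simp
    then show False using a(2) by simp
  qed
  then show ?thesis by blast
qed

lemma adjE'_u_w0: "adj E' u w0" and adjE'_w0_v: "adj E' w0 v"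
  by (auto simp: adj_def E'_def)

lemma conn_E: "connected_graph V E" using ct by (simp add: chemical_tree_def is_tree_def)
lemma acyc_E: "\<not> has_cycle V E" using ct by (simp add: chemical_tree_def is_tree_def)

lemma reachE: "x \<in> V \<Longrightarrow> y \<in> V \<Longrightarrow> (adj E)\<^sup>*\<^sup>* x y"
proof -
  assume "x \<in> V" "y \<in> V"
  then obtain ps where "is_path V E ps" "hd ps = x" "last ps = y"
    using conn_E unfolding connected_graph_def by blast
  then show ?thesis using is_path_hd_last_reach[of V E ps] by simp
qed

lemma reach_u: "x \<in> V \<Longrightarrow> (adj E')\<^sup>*\<^sup>* x u"
proof -
  assume xV: "x \<in> V"
  define h where "h = (\<lambda>y. if y = w0 then w1 else y)"
  have H: "(adj E')\<^sup>*\<^sup>* (h a) (h b)" if "adj E a b" for a b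
  proof -
    have ab: "{a,b} \<in> E" using that by (simp add: adj_def)
    consider "{a,b} = {w0,w1}" | "{a,b} = {u,v}" | "{a,b} \<noteq> {w0,w1}" "{a,b} \<noteq> {u,v}" by blast
    then show ?thesis
    proof cases
      case 1 then show ?thesis unfolding h_def by (auto simp: doubleton_eq_iff)
    next
      case 2
      have "(adj E')\<^sup>*\<^sup>* u v" using adjE'_u_w0 adjE'_w0_v by auto
      then have "(adj E')\<^sup>*\<^sup>* a b" using 2 reach_sym[of E' u v] by (auto simp: doubleton_eq_iff)
      moreover have "h a = a" "h b = b" using 2 u_w0 v_w0 unfolding h_def by (auto simp: doubleton_eq_iff)
      ultimately show ?thesis by simp
    next
      case 3
      have "a \<noteq> w0" "b \<noteq> w0" using not_w0[OF ab 3(1)] by auto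
      then have "h a = a" "h b = b" unfolding h_def by auto
      moreover have "adj E' a b" using 3 ab unfolding adj_def E'_def by auto
      ultimately show ?thesis by auto
    qed
  qed
  show ?thesis
  proof (cases "x = w0")
    case True
    have "adj E' w0 u" using adjE'_u_w0 adj_sym[of E' u w0] by simp
    then show ?thesis using True by auto
  next
    case False
    have "(adj E')\<^sup>*\<^sup>* (h x) (h u)" by (rule reach_hom[OF H reachE[OF xV uV]])
    then show ?thesis using False u_w0 unfolding h_def by simp
  qed
qed

lemma conn_E': "connected_graph V E'"
  unfolding connected_graph_def
proof (intro ballI)
  fix x y assume "x \<in> V" "y \<in> V"
  then have "(adj E')\<^sup>*\<^sup>* x u" "(adj E')\<^sup>*\<^sup>* u y" using reach_u reach_sym[of E' y u] by auto
  then have "(adj E')\<^sup>*\<^sup>* x y" by (rule rtranclp_trans)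
  then show "\<exists>ps. is_path V E' ps \<and> hd ps = x \<and> last ps = y"
    using walk_to_path[OF _ \<open>y \<in> V\<close> sg'] by blast
qed

lemma acyc_E': "\<not> has_cycle V E'"
proof
  assume "has_cycle V E'"
  then obtain a b where ab: "{a,b} \<in> E'" "(adj (E' - {{a,b}}))\<^sup>*\<^sup>* b a"
    using cycle_to_reach by blast
  obtain h where h: "{h b, h a} \<in> E"
     "\<And>x y. {x,y} \<in> E' - {{a,b}} \<Longrightarrow> h x = h y \<or> {h x, h y} \<in> E - {{h b, h a}}"
  proof (cases "w0 \<in> {a,b}")
    case False
    define h where "h = (\<lambda>y. if y = w0 then u else y)"
    have "{a,b} \<noteq> {u,w0}" "{a,b} \<noteq> {w0,v}" using False by auto
    then have abE: "{a,b} \<in> E" "{a,b} \<noteq> {u,v}" using ab(1) unfolding E'_def by blast+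
    have hab: "h a = a" "h b = b" using False unfolding h_def by auto
    have hba: "{h b, h a} = {a,b}" using hab by (simp add: insert_commute)
    show ?thesis
    proof (rule that[of h])
      show "{h b, h a} \<in> E" using abE hba by simp
      fix x y assume xy: "{x,y} \<in> E' - {{a,b}}"
      consider "{x,y} = {u,w0}" | "{x,y} = {w0,v}" | "{x,y} \<in> E" "{x,y} \<noteq> {w0,w1}" "{x,y} \<noteq> {u,v}"
        using xy unfolding E'_def by blast
      then show "h x = h y \<or> {h x, h y} \<in> E - {{h b, h a}}"
      proof cases
        case 1 then show ?thesis unfolding h_def by (auto simp: doubleton_eq_iff)
      next
        case 2
        then have "{h x, h y} = {u,v}" unfolding h_def using v_w0 by (auto simp: doubleton_eq_iff)
        then show ?thesis using uv abE hba by auto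
      next
        case 3
        have "x \<noteq> w0" "y \<noteq> w0" using not_w0[OF 3(1,2)] by auto
        then have "h x = x" "h y = y" unfolding h_def by auto
        then show ?thesis using 3 xy hba by auto
      qed
    qed
  next
    case True
    have "{a,b} \<notin> E - {{w0,w1},{u,v}}" using not_w0[of a b] True by blast
    then have "{a,b} = {u,w0} \<or> {a,b} = {w0,v}" using ab(1) unfolding E'_def by blast
    then show ?thesis
    proof
      assume abu: "{a,b} = {u,w0}"
      define h where "h = (\<lambda>y. if y = w0 then v else y)"
      have hu: "h u = u" "h w0 = v" "h v = v" using u_w0 v_w0 unfolding h_def by auto
      have "(a = u \<and> b = w0) \<or> (a = w0 \<and> b = u)" using abu by (simp add: doubleton_eq_iff)
      then have hab: "{h b, h a} = {u,v}" using hu by (metis insert_commute)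
      show ?thesis
      proof (rule that[of h])
        show "{h b, h a} \<in> E" using hab uv by simp
        fix x y assume xy: "{x,y} \<in> E' - {{a,b}}"
        then have xy': "{x,y} = {w0,v} \<or> ({x,y} \<in> E \<and> {x,y} \<noteq> {w0,w1} \<and> {x,y} \<noteq> {u,v})"
          using E'_cases1[of "{x,y}"] xy abu by simp
        then show "h x = h y \<or> {h x, h y} \<in> E - {{h b, h a}}"
        proof
          assume "{x,y} = {w0,v}"
          then have "(x = w0 \<and> y = v) \<or> (x = v \<and> y = w0)" by (simp add: doubleton_eq_iff)
          then have "h x = h y" using hu by metis
          then show ?thesis by simp
        next
          assume 3: "{x,y} \<in> E \<and> {x,y} \<noteq> {w0,w1} \<and> {x,y} \<noteq> {u,v}"
          have "x \<noteq> w0" "y \<noteq> w0" using not_w0[of x y] 3 by blast+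
          then have "h x = x" "h y = y" unfolding h_def by auto
          then show ?thesis using 3 hab by simp
        qed
      qed
    next
      assume abv: "{a,b} = {w0,v}"
      define h where "h = (\<lambda>y. if y = w0 then u else y)"
      have hv: "h v = v" "h w0 = u" "h u = u" using v_w0 u_w0 unfolding h_def by auto
      have "(a = w0 \<and> b = v) \<or> (a = v \<and> b = w0)" using abv by (simp add: doubleton_eq_iff)
      then have hab: "{h b, h a} = {u,v}" using hv by (metis insert_commute)
      show ?thesis
      proof (rule that[of h])
        show "{h b, h a} \<in> E" using hab uv by simp
        fix x y assume xy: "{x,y} \<in> E' - {{a,b}}"
        then have xy': "{x,y} = {u,w0} \<or> ({x,y} \<in> E \<and> {x,y} \<noteq> {w0,w1} \<and> {x,y} \<noteq> {u,v})"
          using E'_cases2[of "{x,y}"] xy abv by simp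
        then show "h x = h y \<or> {h x, h y} \<in> E - {{h b, h a}}"
        proof
          assume "{x,y} = {u,w0}"
          then have "(x = u \<and> y = w0) \<or> (x = w0 \<and> y = u)" by (simp add: doubleton_eq_iff)
          then have "h x = h y" using hv by metis
          then show ?thesis by simp
        next
          assume 3: "{x,y} \<in> E \<and> {x,y} \<noteq> {w0,w1} \<and> {x,y} \<noteq> {u,v}"
          have "x \<noteq> w0" "y \<noteq> w0" using not_w0[of x y] 3 by blast+
          then have "h x = x" "h y = y" unfolding h_def by auto
          then show ?thesis using 3 hab by simp
        qed
      qed
    qed
  qed
  have H: "(adj (E - {{h b, h a}}))\<^sup>*\<^sup>* (h x) (h y)" if "adj (E' - {{a,b}}) x y" for x y
  proof -
    have "{x,y} \<in> E' - {{a,b}}" using that by (simp add: adj_def)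
    then have "h x = h y \<or> {h x, h y} \<in> E - {{h b, h a}}" by (rule h(2))
    then show ?thesis
    proof
      assume "h x = h y" then show ?thesis by simp
    next
      assume "{h x, h y} \<in> E - {{h b, h a}}"
      then have "adj (E - {{h b, h a}}) (h x) (h y)" by (simp add: adj_def)
      then show ?thesis by (rule r_into_rtranclp)
    qed
  qed
  have "(adj (E - {{h b, h a}}))\<^sup>*\<^sup>* (h b) (h a)" by (rule reach_hom[OF H ab(2)])
  then have "has_cycle V E" by (rule reach_to_cycle[OF sg h(1)])
  then show False using acyc_E by simp
qed

lemma ct': "chemical_tree V E'"
proof -
  have "deg E' x \<le> 4" if "x \<in> V" for x
  proof -
    have "deg E x \<le> 4" using ct that by (simp add: chemical_tree_def)
    then show ?thesis using d'_w0 d'_w1 d'_same[of x] by (cases "x = w0"; cases "x = w1") auto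
  qed
  then show ?thesis using sg' conn_E' acyc_E' uV unfolding chemical_tree_def is_tree_def by auto
qed

end


lemma seg_orient:
  assumes "is_segment V G qs" "x \<in> set qs" "deg G x \<noteq> 2"
  shows "\<exists>qs'. is_segment V G qs' \<and> set qs' = set qs \<and> qs' ! 0 = x"
proof -
  have ne: "qs \<noteq> []" using assms(2) by auto
  have "x = hd qs \<or> x = last qs" by (rule seg_end[OF assms])
  then show ?thesis
  proof
    assume "x = hd qs"
    then show ?thesis using assms(1) ne by (intro exI[of _ qs]) (simp add: hd_conv_nth)
  next
    assume "x = last qs"
    then have "rev qs ! 0 = x" using ne by (simp add: rev_nth last_conv_nth)
    then show ?thesis using is_segment_rev[OF assms(1)] by (intro exI[of _ "rev qs"]) simp
  qed
qed

lemma seg_edge0: "is_segment V G qs \<Longrightarrow> {qs!0, qs!1} \<in> G"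
  unfolding is_segment_def using path_edge[of V G qs 0] by simp

lemma seg_mid_nb:
  assumes "is_segment V G qs" "x \<in> set qs" "deg G x = 2"
  shows "\<exists>a b. a \<in> set qs \<and> b \<in> set qs \<and> a \<noteq> b \<and> {x,a} \<in> G \<and> {x,b} \<in> G"
proof -
  obtain i where i: "0 < i" "Suc i < length qs" "qs ! i = x" using seg_mid[OF assms] by blast
  have p: "is_path V G qs" using assms(1) by (simp add: is_segment_def)
  note P = path_internal[OF p i(1,2)]
  show ?thesis
    using P i by (intro exI[of _ "qs!(i-1)"] exI[of _ "qs!Suc i"]) auto
qed

context trf begin

lemma u_notin_ps: "u \<notin> set ps"
proof
  assume "u \<in> set ps"
  then obtain i where i: "i < length ps" "ps ! i = u" by (meson in_set_conv_nth)
  show False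
  proof (cases "i = 0")
    case True then show ?thesis using i u_w0 by simp
  next
    case False
    show ?thesis
    proof (cases "Suc i < length ps")
      case True then show ?thesis using dint[of i] False i du by simp
    next
      case False
      then have "i = length ps - 1" using i by simp
      then have "u = last ps" using i ne by (simp add: last_conv_nth)
      then show ?thesis using dlast du by simp
    qed
  qed
qed

lemma last_ne: "last ps \<noteq> w0" "last ps \<noteq> w1"
proof -
  have l: "last ps = ps ! (length ps - 1)" using ne by (simp add: last_conv_nth)
  have "length ps - 1 < length ps" using ne by simp
  then show "last ps \<noteq> w0" "last ps \<noteq> w1"
    using l nth_eq_iff_index_eq[OF psd _ l0] nth_eq_iff_index_eq[OF psd _ l1] len by auto
qed

lemma path_transfer:
  assumes "u \<notin> set qs" "w0 \<notin> set qs"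
  shows "is_path V E qs \<longleftrightarrow> is_path V E' qs"
proof -
  have "{qs!i, qs!Suc i} \<in> E \<longleftrightarrow> {qs!i, qs!Suc i} \<in> E'" if "Suc i < length qs" for i
  proof -
    have m: "qs!i \<in> set qs" "qs!Suc i \<in> set qs" using that by auto
    then have "qs!i \<noteq> u" "qs!Suc i \<noteq> u" "qs!i \<noteq> w0" "qs!Suc i \<noteq> w0" using assms by auto
    then have "{qs!i, qs!Suc i} \<noteq> {w0,w1}" "{qs!i, qs!Suc i} \<noteq> {u,v}"
      "{qs!i, qs!Suc i} \<noteq> {u,w0}" "{qs!i, qs!Suc i} \<noteq> {w0,v}"
      by (auto simp: doubleton_eq_iff)
    then show ?thesis unfolding E'_mem by blast
  qed
  then show ?thesis unfolding is_path_def by auto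
qed

lemma seg_transfer:
  assumes "u \<notin> set qs" "w0 \<notin> set qs" "w1 \<notin> set qs"
  shows "is_segment V E qs \<longleftrightarrow> is_segment V E' qs"
proof -
  have d: "deg E' x = deg E x" if "x \<in> set qs" for x
    using d'_same[of x] assms that by auto
  show ?thesis
  proof
    assume s: "is_segment V E qs"
    then have ne: "qs \<noteq> []" by (auto simp: is_segment_def)
    have "hd qs \<in> set qs" "last qs \<in> set qs" using ne by auto
    then show "is_segment V E' qs" using s d path_transfer[OF assms(1,2)] unfolding is_segment_def
      by (auto simp del: hd_in_set last_in_set)
  next
    assume s: "is_segment V E' qs"
    then have ne: "qs \<noteq> []" by (auto simp: is_segment_def)
    have "hd qs \<in> set qs" "last qs \<in> set qs" using ne by auto
    then show "is_segment V E qs" using s d path_transfer[OF assms(1,2)] unfolding is_segment_def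
      by (auto simp del: hd_in_set last_in_set)
  qed
qed

lemma seg_ps: "is_segment V E ps"
  using pp unfolding pendent_path_def is_segment_def by auto

lemma seg_uv: "is_segment V E [u,v]"
  unfolding is_segment_def using uV vV uv uv_ne du dv by (auto simp: is_path_Cons2 is_path_single)

lemma seg'_uw0v: "is_segment V E' [u,w0,v]"
proof -
  have "{u,w0} \<in> E'" "{w0,v} \<in> E'" by (auto simp: E'_def)
  moreover have "deg E' v > 2" using d'_v dv by simp
  ultimately show ?thesis
    unfolding is_segment_def using uV vV w0V uv_ne u_w0 v_w0 d'_u d'_w0
    by (auto simp: is_path_Cons2 is_path_single nth_Cons')
qed

lemma tl_nth: "i < length ps - 1 \<Longrightarrow> tl ps ! i = ps ! Suc i"
  using ne by (cases ps) auto

lemma seg'_tl: "is_segment V E' (tl ps)"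
proof -
  have ps_eq: "ps = w0 # tl ps" using ne by (cases ps) auto
  have lt: "length (tl ps) = length ps - 1" by simp
  have tne: "tl ps \<noteq> []"
  proof
    assume "tl ps = []"
    then have "length (tl ps) = 0" by simp
    then show False using len by simp
  qed
  have "is_path V E ([w0] @ tl ps)" using psp ps_eq by simp
  then have pE: "is_path V E (tl ps)" using is_path_suffix[of V E "[w0]" "tl ps"] tne by simp
  have sps: "set ps = insert w0 (set (tl ps))" by (subst ps_eq) simp
  have "distinct (w0 # tl ps)" using psd ps_eq by simp
  then have "w0 \<notin> set (tl ps)" by simp
  moreover have "u \<notin> set (tl ps)" using u_notin_ps sps by blast
  ultimately have pE': "is_path V E' (tl ps)" using path_transfer[of "tl ps"] pE by simp
  have "hd (tl ps) = tl ps ! 0" using tne by (simp add: hd_conv_nth)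
  also have "\<dots> = w1" using tl_nth[of 0] len by simp
  finally have h: "hd (tl ps) = w1" .
  have l: "last (tl ps) = last ps" using tne by (simp add: last_tl)
  have "deg E' (last ps) = deg E (last ps)" using d'_same last_ne by blast
  then have dl: "deg E' (last (tl ps)) > 2" using l dlast by simp
  have "deg E' (tl ps ! i) = 2" if "0 < i" "Suc i < length (tl ps)" for i
  proof -
    have e: "tl ps ! i = ps ! Suc i" using that tl_nth[of i] by simp
    have si: "Suc i < length ps" using that by simp
    have "ps ! Suc i \<noteq> w0" using nth_eq_iff_index_eq[OF psd si l0] by simp
    moreover have "ps ! Suc i \<noteq> w1" using nth_eq_iff_index_eq[OF psd si l1] that(1) by simp
    ultimately have "deg E' (ps ! Suc i) = deg E (ps ! Suc i)" by (rule d'_same)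
    moreover have "deg E (ps ! Suc i) = 2" using dint[of "Suc i"] that by simp
    ultimately show ?thesis using e by simp
  qed
  moreover have "length (tl ps) \<ge> 2" using lt len by simp
  ultimately show ?thesis unfolding is_segment_def using pE' h dl d'_w1 by simp
qed

lemma E_u_seg: "is_segment V E qs \<Longrightarrow> u \<in> set qs \<Longrightarrow> set qs = {u,v}"
proof -
  assume s: "is_segment V E qs" "u \<in> set qs"
  obtain qs' where q: "is_segment V E qs'" "set qs' = set qs" "qs' ! 0 = u"
    using seg_orient[OF s] du by auto
  have "{u, qs'!1} \<in> E" using seg_edge0[OF q(1)] q(3) by simp
  then have "qs'!1 = v" by (rule nb_u)
  then have "qs' = [u,v]" using seg_walk[OF sg q(1) seg_uv] q(3) by simp
  then show ?thesis using q(2) by simp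
qed

lemma E_w0_seg: "is_segment V E qs \<Longrightarrow> w0 \<in> set qs \<Longrightarrow> set qs = set ps"
proof -
  assume s: "is_segment V E qs" "w0 \<in> set qs"
  obtain qs' where q: "is_segment V E qs'" "set qs' = set qs" "qs' ! 0 = w0"
    using seg_orient[OF s] dw0 by auto
  have "{w0, qs'!1} \<in> E" using seg_edge0[OF q(1)] q(3) by simp
  then have "qs'!1 = w1" by (rule nb_w0)
  then have "qs' = ps" using seg_walk[OF sg q(1) seg_ps] q(3) by simp
  then show ?thesis using q(2) by simp
qed

lemma E_w1_seg: "is_segment V E qs \<Longrightarrow> w1 \<in> set qs \<Longrightarrow> w0 \<in> set qs"
proof -
  assume s: "is_segment V E qs" "w1 \<in> set qs"
  obtain a b where ab: "a \<in> set qs" "b \<in> set qs" "a \<noteq> b" "{w1,a} \<in> E" "{w1,b} \<in> E"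
    using seg_mid_nb[OF s dw1] by blast
  have "a = w0 \<or> a = w2" "b = w0 \<or> b = w2" using nb_w1 ab(4,5) by auto
  then show ?thesis using ab by auto
qed

lemma E'_u_seg: "is_segment V E' qs \<Longrightarrow> u \<in> set qs \<Longrightarrow> set qs = {u,w0,v}"
proof -
  assume s: "is_segment V E' qs" "u \<in> set qs"
  obtain qs' where q: "is_segment V E' qs'" "set qs' = set qs" "qs' ! 0 = u"
    using seg_orient[OF s] d'_u by auto
  have "{u, qs'!1} \<in> {e\<in>E'. u \<in> e}" using seg_edge0[OF q(1)] q(3) by simp
  then have "{u, qs'!1} = {u,w0}" using E'_u by simp
  then have "qs'!1 = w0" using u_w0 by (simp add: doubleton_eq_iff)
  then have "qs' = [u,w0,v]" using seg_walk[OF sg' q(1) seg'_uw0v] q(3) by simp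
  then show ?thesis using q(2) by simp
qed

lemma E'_w0_seg: "is_segment V E' qs \<Longrightarrow> w0 \<in> set qs \<Longrightarrow> u \<in> set qs"
proof -
  assume s: "is_segment V E' qs" "w0 \<in> set qs"
  obtain a b where ab: "a \<in> set qs" "b \<in> set qs" "a \<noteq> b" "{w0,a} \<in> E'" "{w0,b} \<in> E'"
    using seg_mid_nb[OF s d'_w0] by blast
  have "{w0,a} \<in> {e\<in>E'. w0 \<in> e}" "{w0,b} \<in> {e\<in>E'. w0 \<in> e}" using ab by auto
  then have "{w0,a} \<in> {{u,w0},{w0,v}}" "{w0,b} \<in> {{u,w0},{w0,v}}" using E'_w0 by simp_all
  then have "a = u \<or> a = v" "b = u \<or> b = v" by (auto simp: doubleton_eq_iff)
  then show ?thesis using ab by auto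
qed

lemma E'_w1_seg: "is_segment V E' qs \<Longrightarrow> w1 \<in> set qs \<Longrightarrow> set qs = set (tl ps)"
proof -
  assume s: "is_segment V E' qs" "w1 \<in> set qs"
  obtain qs' where q: "is_segment V E' qs'" "set qs' = set qs" "qs' ! 0 = w1"
    using seg_orient[OF s] d'_w1 by auto
  have "{w1, qs'!1} \<in> {e\<in>E'. w1 \<in> e}" using seg_edge0[OF q(1)] q(3) by simp
  then have "{w1, qs'!1} \<in> E" "{w1, qs'!1} \<noteq> {w0,w1}" using E'_w1 by auto
  then have "qs'!1 = w2" using nb_w1 by (auto simp: doubleton_eq_iff)
  moreover have "tl ps ! 0 = w1" "tl ps ! 1 = w2" using tl_nth[of 0] tl_nth[of 1] len by (auto simp: numeral_2_eq_2)
  ultimately have "qs' = tl ps" using seg_walk[OF sg' q(1) seg'_tl] q(3) by simp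
  then show ?thesis using q(2) by simp
qed

definition "A = {set qs | qs. is_segment V E qs \<and> u \<notin> set qs \<and> w0 \<notin> set qs \<and> w1 \<notin> set qs}"

lemma A_fin: "finite A"
proof -
  have "A \<subseteq> Pow V" unfolding A_def is_segment_def is_path_def by auto
  moreover have "finite V" using sg by (simp add: simple_graph_def)
  ultimately show ?thesis by (meson finite_Pow_iff finite_subset)
qed

lemma A_mem: "X \<in> A \<Longrightarrow> u \<notin> X \<and> w0 \<notin> X \<and> w1 \<notin> X"
  unfolding A_def by auto

lemma Seg_E: "{set qs | qs. is_segment V E qs} = insert (set ps) (insert {u,v} A)"
proof (intro equalityI subsetI)
  fix X assume "X \<in> {set qs | qs. is_segment V E qs}"
  then obtain qs where q: "X = set qs" "is_segment V E qs" by blast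
  show "X \<in> insert (set ps) (insert {u,v} A)"
  proof (cases "u \<in> set qs \<or> w0 \<in> set qs \<or> w1 \<in> set qs")
    case True
    then show ?thesis using E_u_seg[OF q(2)] E_w0_seg[OF q(2)] E_w1_seg[OF q(2)] q(1) by blast
  next
    case False then show ?thesis using q unfolding A_def by blast
  qed
next
  fix X assume X: "X \<in> insert (set ps) (insert {u,v} A)"
  have "set [u,v] = {u,v}" by simp
  then show "X \<in> {set qs | qs. is_segment V E qs}"
    using X seg_ps seg_uv unfolding A_def by blast
qed

lemma Seg_E': "{set qs | qs. is_segment V E' qs} = insert (set (tl ps)) (insert {u,w0,v} A)"
proof (intro equalityI subsetI)
  fix X assume "X \<in> {set qs | qs. is_segment V E' qs}"
  then obtain qs where q: "X = set qs" "is_segment V E' qs" by blast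
  show "X \<in> insert (set (tl ps)) (insert {u,w0,v} A)"
  proof (cases "u \<in> set qs \<or> w0 \<in> set qs \<or> w1 \<in> set qs")
    case True
    then show ?thesis using E'_u_seg[OF q(2)] E'_w0_seg[OF q(2)] E'_w1_seg[OF q(2)] q(1) by blast
  next
    case False then show ?thesis using q seg_transfer[of qs] unfolding A_def by blast
  qed
next
  fix X assume X: "X \<in> insert (set (tl ps)) (insert {u,w0,v} A)"
  show "X \<in> {set qs | qs. is_segment V E' qs}"
  proof -
    { assume "X \<in> A"
      then obtain qs where "X = set qs" "is_segment V E qs" "u \<notin> set qs" "w0 \<notin> set qs" "w1 \<notin> set qs"
        unfolding A_def by blast
      then have ?thesis using seg_transfer[of qs] by blast }
    moreover have "set [u,w0,v] = {u,w0,v}" by simp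
    ultimately show ?thesis using X seg'_tl seg'_uw0v by blast
  qed
qed

lemma w0_ps: "w0 \<in> set ps" and w1_tl: "w1 \<in> set (tl ps)"
proof -
  show "w0 \<in> set ps" using l0 by simp
  have "0 < length (tl ps)" using len by simp
  then have "tl ps ! 0 \<in> set (tl ps)" by (rule nth_mem)
  moreover have "tl ps ! 0 = w1" using tl_nth[of 0] len by simp
  ultimately show "w1 \<in> set (tl ps)" by simp
qed

lemma nseg: "num_segments V E' = num_segments V E"
proof -
  have "card {set qs | qs. is_segment V E qs} = card A + 2"
  proof -
    have "set ps \<notin> A" "{u,v} \<notin> A" using A_mem w0_ps by blast+
    moreover have "set ps \<noteq> {u,v}" using w0_ps u_w0 v_w0 by auto
    ultimately show ?thesis unfolding Seg_E using A_fin by simp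
  qed
  moreover have "card {set qs | qs. is_segment V E' qs} = card A + 2"
  proof -
    have "set (tl ps) \<notin> A" "{u,w0,v} \<notin> A" using A_mem w1_tl by blast+
    moreover have "set (tl ps) \<noteq> {u,w0,v}" using w1_tl u_w1 v_w1 w01 by auto
    ultimately show ?thesis unfolding Seg_E' using A_fin by simp
  qed
  ultimately show ?thesis unfolding num_segments_def by simp
qed

end


lemma prod_pair: "a \<noteq> b \<Longrightarrow> (\<Prod>x\<in>{a,b}. f x) = f a * (f b :: nat)"
  by simp

context trf begin

definition "Oe = E - {{w0,w1},{u,v}}"

lemma Oe_fin: "finite Oe" unfolding Oe_def using fE by simp

lemma w12_Oe: "{w1,w2} \<in> Oe"
proof -
  have "{w1,w2} \<noteq> {w0,w1}" using w02 w12 by (auto simp: doubleton_eq_iff)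
  moreover have "{w1,w2} \<noteq> {u,v}" using u_w1 v_w1 by (auto simp: doubleton_eq_iff)
  ultimately show ?thesis unfolding Oe_def using e12 by simp
qed

lemma Oe_same:
  assumes "e \<in> Oe - {{w1,w2}}"
  shows "(\<Prod>x\<in>e. deg E' x) = (\<Prod>x\<in>e. deg E x)"
proof (rule prod.cong[OF refl])
  fix x assume x: "x \<in> e"
  have eE: "e \<in> E" "e \<noteq> {w0,w1}" "e \<noteq> {w1,w2}" using assms unfolding Oe_def by auto
  have "x \<noteq> w0"
  proof
    assume "x = w0"
    then have "e \<in> {e\<in>E. w0 \<in> e}" using eE x by simp
    then show False using E_w0 eE by simp
  qed
  moreover have "x \<noteq> w1"
  proof
    assume "x = w1"
    then obtain y where y: "e = {w1,y}" using edge_form[OF sg eE(1)] x by blast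
    then have "{w1,y} \<in> E" using eE by simp
    then have "y = w0 \<or> y = w2" by (rule nb_w1)
    then show False using y eE by (auto simp: insert_commute)
  qed
  ultimately show "deg E' x = deg E x" by (rule d'_same)
qed

lemma M2_E: "M2 E = 2 + deg E v + 4 + (\<Sum>e\<in>Oe - {{w1,w2}}. \<Prod>x\<in>e. deg E x)"
proof -
  have Eeq: "E = insert {w0,w1} (insert {u,v} Oe)" unfolding Oe_def using e01 uv by blast
  have n1: "{w0,w1} \<notin> insert {u,v} Oe" using u_w0 v_w0 unfolding Oe_def by (auto simp: doubleton_eq_iff)
  have n2: "{u,v} \<notin> Oe" unfolding Oe_def by simp
  have Oeq: "Oe = insert {w1,w2} (Oe - {{w1,w2}})" using w12_Oe by blast
  have "M2 E = (\<Prod>x\<in>{w0,w1}. deg E x) + ((\<Prod>x\<in>{u,v}. deg E x) + (\<Sum>e\<in>Oe. \<Prod>x\<in>e. deg E x))"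
    unfolding M2_def by (subst Eeq, subst sum.insert[OF _ n1], simp add: Oe_fin, subst sum.insert[OF Oe_fin n2], rule refl)
  also have "(\<Sum>e\<in>Oe. \<Prod>x\<in>e. deg E x) = (\<Prod>x\<in>{w1,w2}. deg E x) + (\<Sum>e\<in>Oe - {{w1,w2}}. \<Prod>x\<in>e. deg E x)"
    using Oe_fin w12_Oe by (simp add: sum.remove)
  finally show ?thesis using w01 w12 uv_ne dw0 dw1 dw2 du by simp
qed

lemma M2_E': "M2 E' = 2 + 2 * deg E v + 2 + (\<Sum>e\<in>Oe - {{w1,w2}}. \<Prod>x\<in>e. deg E x)"
proof -
  have E'eq: "E' = insert {u,w0} (insert {w0,v} Oe)" unfolding Oe_def E'_def by blast
  have n1: "{u,w0} \<notin> insert {w0,v} Oe" using uv_ne u_w0 uw0_notE unfolding Oe_def by (auto simp: doubleton_eq_iff)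
  have n2: "{w0,v} \<notin> Oe" using w0v_notE unfolding Oe_def by simp
  have "M2 E' = (\<Prod>x\<in>{u,w0}. deg E' x) + ((\<Prod>x\<in>{w0,v}. deg E' x) + (\<Sum>e\<in>Oe. \<Prod>x\<in>e. deg E' x))"
    unfolding M2_def by (subst E'eq, subst sum.insert[OF _ n1], simp add: Oe_fin, subst sum.insert[OF Oe_fin n2], rule refl)
  also have "(\<Sum>e\<in>Oe. \<Prod>x\<in>e. deg E' x) = (\<Prod>x\<in>{w1,w2}. deg E' x) + (\<Sum>e\<in>Oe - {{w1,w2}}. \<Prod>x\<in>e. deg E' x)"
    using Oe_fin w12_Oe by (simp add: sum.remove)
  also have "(\<Sum>e\<in>Oe - {{w1,w2}}. \<Prod>x\<in>e. deg E' x) = (\<Sum>e\<in>Oe - {{w1,w2}}. \<Prod>x\<in>e. deg E x)"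
    by (rule sum.cong[OF refl Oe_same])
  finally show ?thesis
    using w01 w12 uv_ne u_w0 v_w0 d'_u d'_w0 d'_v d'_w1 dw2 d'_same[OF w02[symmetric] w12[symmetric]] by simp
qed

lemma M2_gt: "M2 E < M2 E'"
  using M2_E M2_E' dv by simp

end

theorem lemma4:
  fixes V :: "'a set" and E :: "'a set set" and n k :: nat
  assumes "3 \<le> k" and "k \<le> n - 1"
    and "CT V E n k"
    and "\<forall>(V' :: 'a set) E'. CT V' E' n k \<longrightarrow> M2 E' \<le> M2 E"
    and "\<exists>u\<in>V. \<exists>v\<in>V. {u, v} \<in> E \<and> deg E u = 1 \<and> deg E v > 2"
  shows "\<not> (\<exists>ps. pendent_path V E ps \<and> length ps - 1 > 2)"
proof
  assume "\<exists>ps. pendent_path V E ps \<and> length ps - 1 > 2"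
  then obtain ps where ps: "pendent_path V E ps" "length ps \<ge> 4" by force
  obtain u v where uv: "u \<in> V" "v \<in> V" "{u, v} \<in> E" "deg E u = 1" "deg E v > 2"
    using assms(5) by blast
  have ct: "chemical_tree V E" "card V = n" "num_segments V E = k"
    using assms(3) by (auto simp: CT_def)
  interpret T: trf V E u v ps
    using ct(1) uv ps by unfold_locales
  have "CT V T.E' n k"
    unfolding CT_def using T.ct' ct T.nseg by simp
  then have "M2 T.E' \<le> M2 E" using assms(4) by blast
  then show False using T.M2_gt by simp
qed


end
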